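(* Let $b,N,K,\Delta,R,L_0,L$ be positive integers with $2\le\Delta\le R-K<b-K-2$ and $\log_2N<K\le L_0\le L<b-\log_2(b+10)$. All configurations below are configurations over a fixed set of $N$ levels as in the context (with $z<2^b$). Then: (1) If a configuration consists of exactly one significand, in level $\lambda$, then $G=L_0+1-b-\lambda$ satisfies $2^K\le A(G)<2^b$. (2) Let $C$ be a configuration and $C'$ the configuration obtained by adding one significand to level $\ell$; write $SS'_\ell$, $A'_\ell(\cdot)$, $A'(\cdot)$ for the quantities of $C'$ and $A(\cdot)$ for those of $C$. Let $G$ be an integer with $A(G)<2^b$. (a) If $A'_\ell(G)\ge 2^b$, then $G_\downarrow=R-\lfloor\log_2 SS'_\ell\rfloor-\ell$ satisfies $2^K\le A'(G_\downarrow)<2^b$. (b) If $A'_\ell(G)<2^b$ but $A'(G)\ge 2^b$, then $G_\downarrow=G-\Delta$ satisfies $2^K\le A'(G_\downarrow)<2^b$. (3) If $C'$ is obtained from $C$ by removing significands, then $A'(G)\le A(G)$ for every integer $G$; in particular $A(G)<2^b$ implies $A'(G)<2^b$. (4) For any nonempty configuration with largest nonempty level $\lambda$, let $H_r=\lfloor SS_{\lambda-r}/2^b\rfloor$ for $r=0,\dots,b$, $E=\sum_{r=0}^b\lfloor H_r2^{-r+1}\rfloor$, $t=\lfloor\log_2\max\{E,1\}\rfloor$, and $G_\uparrow=L+1-b-t-\lambda$. Then $2^L\le A(G_\uparrow)<2^b$.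
   Context: Fix an integer $b\ge 2$. There is a set $\mathcal L$ of $N$ levels, which are consecutive integers. Each level $\ell$ holds a finite (possibly empty) multiset of normalized significands, each an integer in $[2^{b-1},2^b)$. Let $z$ be the total number of stored significands over all levels; assume $z<2^b$. For each level, $SS_\ell$ is the sum of its significands (so $SS_\ell=0$ iff the level is empty); set $SS_\ell=0$ for integers $\ell\notin\mathcal L$. The level weight is $W_\ell=SS_\ell2^\ell$. For an integer global shift $G$, $A_\ell(G)=\lfloor W_\ell2^G\rfloor+1$ if $SS_\ell>0$ and $A_\ell(G)=0$ if $SS_\ell=0$; $A(G)=\sum_\ell A_\ell(G)$ and $M(G)=\sum_\ell W_\ell2^G$. The configuration is nonempty if $z\ge1$. (In the paper's terminology a shift $G$ is safe if $A(G)<2^b$, good if $A(G)\ge2^K$, strongly good if $A(G)\ge 2^L$.) *)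

theory Defs
  imports Complex_Main "HOL-Library.Multiset"
begin

type_synonym config = "int \<Rightarrow> nat multiset"

definition levels :: "int \<Rightarrow> nat \<Rightarrow> int set" where
  "levels lo N = {lo..<lo + int N}"

definition zcount :: "int \<Rightarrow> nat \<Rightarrow> config \<Rightarrow> nat" where
  "zcount lo N C = (\<Sum>l\<in>levels lo N. size (C l))"

definition valid_config :: "nat \<Rightarrow> int \<Rightarrow> nat \<Rightarrow> config \<Rightarrow> bool" where
  "valid_config b lo N C \<longleftrightarrow>
     (\<forall>l. l \<notin> levels lo N \<longrightarrow> C l = {#}) \<and>
     (\<forall>l. \<forall>x \<in># C l. 2^(b-1) \<le> x \<and> x < 2^b) \<and>
     zcount lo N C < 2^b"

definition SS :: "config \<Rightarrow> int \<Rightarrow> nat" where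
  "SS C l = sum_mset (C l)"

definition W :: "config \<Rightarrow> int \<Rightarrow> real" where
  "W C l = real (SS C l) * 2 powr (real_of_int l)"

definition A_lev :: "config \<Rightarrow> int \<Rightarrow> int \<Rightarrow> int" where
  "A_lev C G l = (if SS C l > 0 then \<lfloor>W C l * 2 powr (real_of_int G)\<rfloor> + 1 else 0)"

definition A :: "int \<Rightarrow> nat \<Rightarrow> config \<Rightarrow> int \<Rightarrow> int" where
  "A lo N C G = (\<Sum>l\<in>levels lo N. A_lev C G l)"

definition M :: "int \<Rightarrow> nat \<Rightarrow> config \<Rightarrow> int \<Rightarrow> real" where
  "M lo N C G = (\<Sum>l\<in>levels lo N. W C l * 2 powr (real_of_int G))"

end

theory Submission imports Defs begin

definition X :: "config \<Rightarrow> int \<Rightarrow> int \<Rightarrow> real" where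
  "X C G l = real (SS C l) * 2 powr (real_of_int (l + G))"

lemma X_nonneg: "0 \<le> X C G l" by (simp add: X_def)

lemma W_X: "W C l * 2 powr (real_of_int G) = X C G l"
  by (simp add: W_def X_def powr_add mult.assoc)

lemma X_shift: "X C (G + d) l = 2 powr (real_of_int d) * X C G l"
  by (simp add: X_def powr_add algebra_simps)

lemma A_lev_ge: "X C G l \<le> real_of_int (A_lev C G l)"
  by (auto simp: A_lev_def W_X X_def)

lemma A_lev_le: "real_of_int (A_lev C G l) \<le> X C G l + 1"
  by (auto simp: A_lev_def W_X X_def)

lemma A_lev_nonneg: "0 \<le> A_lev C G l"
  using A_lev_ge[of C G l] X_nonneg[of C G l] by linarith

lemma card_levels: "card (levels lo N) = N"
  by (simp add: levels_def)

lemma finite_levels: "finite (levels lo N)"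
  by (simp add: levels_def)

lemma A_ge: "(\<Sum>l\<in>levels lo N. X C G l) \<le> real_of_int (A lo N C G)"
  unfolding A_def of_int_sum by (rule sum_mono) (rule A_lev_ge)

lemma A_le: "real_of_int (A lo N C G) \<le> (\<Sum>l\<in>levels lo N. X C G l) + real N"
proof -
  have "real_of_int (A lo N C G) \<le> (\<Sum>l\<in>levels lo N. X C G l + 1)"
    unfolding A_def of_int_sum by (rule sum_mono) (rule A_lev_le)
  also have "\<dots> = (\<Sum>l\<in>levels lo N. X C G l) + real N"
    by (simp add: sum.distrib card_levels)
  finally show ?thesis .
qed

lemma floor_log2:
  assumes "x > 0"
  shows "2 powr (real_of_int \<lfloor>log 2 x\<rfloor>) \<le> x" "x < 2 powr (real_of_int \<lfloor>log 2 x\<rfloor> + 1)"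
proof -
  have "2 powr (real_of_int \<lfloor>log 2 x\<rfloor>) \<le> 2 powr (log 2 x)"
    by (rule powr_mono) auto
  thus "2 powr (real_of_int \<lfloor>log 2 x\<rfloor>) \<le> x" using assms by simp
  have "2 powr (log 2 x) < 2 powr (real_of_int \<lfloor>log 2 x\<rfloor> + 1)"
    by (rule powr_less_mono) auto
  thus "x < 2 powr (real_of_int \<lfloor>log 2 x\<rfloor> + 1)" using assms by simp
qed

lemma sum_mset_sub: "Ms \<subseteq># Ns \<Longrightarrow> sum_mset Ms \<le> (sum_mset Ns :: nat)"
  by (auto simp: subset_mset.le_iff_add)

lemma mem_le_sum_mset: "x \<in># Ms \<Longrightarrow> x \<le> (sum_mset Ms :: nat)"
  by (metis le_add1 multi_member_split sum_mset.add_mset)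

lemma sum_mset_bound: "(\<forall>x\<in>#Ms. x \<le> B) \<Longrightarrow> sum_mset Ms \<le> size Ms * (B::nat)"
  by (induction Ms) auto

lemma params:
  fixes b N K \<Delta> R L :: nat
  assumes "N > 0" "log 2 (real N) < real K" "real L < real b - log 2 (real b + 10)"
  shows "real N < 2^K" "2^L * (real b + 10) < 2^b" "L + 4 \<le> b"
proof -
  have "real N = 2 powr (log 2 (real N))" using assms by simp
  also have "\<dots> < 2 powr K" using assms(2) by (rule powr_less_mono) auto
  finally show "real N < 2^K" by (simp add: powr_realpow)
  have "real b + 10 = 2 powr (log 2 (real b + 10))" by simp
  also have "\<dots> < 2 powr (real b - real L)" using assms(3) by (intro powr_less_mono) auto
  also have "\<dots> = 2^b / 2^L" by (simp add: powr_diff powr_realpow)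
  finally show *: "2^L * (real b + 10) < 2^b" by (simp add: field_simps)
  have "2^(L+3) < (2::real)^b"
  proof -
    have "2^(L+3) = 2^L * (8::real)" by (simp add: power_add)
    also have "\<dots> \<le> 2^L * (real b + 10)" by (intro mult_left_mono) auto
    finally show ?thesis using * by linarith
  qed
  hence "L + 3 < b" by (metis power_strict_increasing_iff one_less_numeral_iff semiring_norm(76))
  thus "L + 4 \<le> b" by simp
qed


lemma A_lev_mono:
  assumes "C' l \<subseteq># C l" shows "A_lev C' G l \<le> A_lev C G l"
proof -
  have ss: "SS C' l \<le> SS C l" using assms by (simp add: SS_def sum_mset_sub)
  show ?thesis
  proof (cases "SS C' l = 0")
    case True thus ?thesis using A_lev_nonneg[of C G l] by (simp add: A_lev_def)
  next
    case False
    have "W C' l * 2 powr G \<le> W C l * 2 powr G"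
      using ss by (simp add: W_def)
    hence "\<lfloor>W C' l * 2 powr G\<rfloor> \<le> \<lfloor>W C l * 2 powr G\<rfloor>" by (rule floor_mono)
    thus ?thesis using False ss by (simp add: A_lev_def)
  qed
qed

lemma part3:
  assumes "\<forall>l. C' l \<subseteq># C l" shows "A lo N C' G \<le> A lo N C G"
  unfolding A_def by (rule sum_mono) (use assms A_lev_mono in blast)

lemma A_single:
  assumes "lam \<in> levels lo N" "\<forall>l. l \<noteq> lam \<longrightarrow> C l = {#}"
  shows "A lo N C G = A_lev C G lam"
proof -
  have "A lo N C G = A_lev C G lam + (\<Sum>l\<in>levels lo N - {lam}. A_lev C G l)"
    unfolding A_def using assms(1) finite_levels[of lo N] by (simp add: sum.remove)
  also have "(\<Sum>l\<in>levels lo N - {lam}. A_lev C G l) = 0"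
    using assms(2) by (intro sum.neutral) (auto simp: A_lev_def SS_def)
  finally show ?thesis by simp
qed

lemma real_pow_b1: "b > 0 \<Longrightarrow> real (2^(b-1)) = 2 powr (real b - 1)"
  by (simp add: powr_realpow[symmetric] of_nat_diff)

lemma part1:
  fixes b K L0 :: nat
  assumes "valid_config b lo N C" "lam \<in> levels lo N" "C lam = {#s#}"
    "\<forall>l. l \<noteq> lam \<longrightarrow> C l = {#}" "b > 0" "K \<le> L0" "L0 + 4 \<le> b"
  shows "2^K \<le> A lo N C (int L0 + 1 - int b - lam) \<and> A lo N C (int L0 + 1 - int b - lam) < 2^b"
proof -
  define G where "G = int L0 + 1 - int b - lam"
  have s: "2^(b-1) \<le> s" "s < 2^b" using assms(1,3) unfolding valid_config_def by (metis multi_member_last)+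
  have AA: "A lo N C G = A_lev C G lam" using assms(2,4) by (rule A_single)
  have XX: "X C G lam = real s * 2 powr (real L0 + 1 - real b)"
    by (simp add: X_def SS_def assms(3) G_def algebra_simps)
  have "2 powr (real b - 1) * 2 powr (real L0 + 1 - real b) \<le> real s * 2 powr (real L0 + 1 - real b)"
  proof (rule mult_right_mono)
    show "2 powr (real b - 1) \<le> real s" using s(1) real_pow_b1[OF assms(5)] of_nat_le_iff by metis
  qed simp
  moreover have "2 powr (real b - 1) * 2 powr (real L0 + 1 - real b) = 2 powr (real L0)"
    by (simp add: powr_add[symmetric])
  moreover have "(2::real) powr (real K) \<le> 2 powr (real L0)" using assms(6) by simp
  ultimately have "2 powr (real K) \<le> real_of_int (A lo N C G)"
    using A_lev_ge[of C G lam] AA XX by linarith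
  hence lo: "2^K \<le> A lo N C G"
    by (simp add: powr_realpow)
  have "real s * 2 powr (real L0 + 1 - real b) < 2 powr (real b) * 2 powr (real L0 + 1 - real b)"
  proof (rule mult_strict_right_mono)
    have "real s < real (2^b)" using s(2) of_nat_less_iff by metis
    thus "real s < 2 powr real b" by (simp add: powr_realpow)
  qed simp
  moreover have "2 powr (real b) * 2 powr (real L0 + 1 - real b) = 2 powr (real L0 + 1)"
    by (simp add: powr_add[symmetric])
  moreover have "(2::real) powr (real L0 + 1) + 1 \<le> 2 powr (real b)"
  proof -
    have "(1::real) \<le> 2 powr (real L0 + 1)" by (rule ge_one_powr_ge_zero) auto
    hence "(2::real) powr (real L0 + 1) + 1 \<le> 2 powr (real L0 + 1) + 2 powr (real L0 + 1)" by simp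
    also have "\<dots> = 2 powr (real L0 + 2)" by (simp add: powr_add)
    also have "\<dots> \<le> 2 powr (real b)" using assms(7) by simp
    finally show ?thesis .
  qed
  ultimately have "real_of_int (A lo N C G) < 2 powr real b"
    using A_lev_le[of C G lam] AA XX by linarith
  hence "A lo N C G < 2^b"
    by (simp add: powr_realpow)
  with lo show ?thesis by (simp add: G_def)
qed


lemma int_lt_pow: "(x < (2::int)^n) = (real_of_int x < 2 powr real n)"
  by (simp add: powr_realpow)
lemma int_ge_pow: "((2::int)^n \<le> x) = (2 powr real n \<le> real_of_int x)"
  by (simp add: powr_realpow)

lemma pw: "(2::real) powr a * 2 powr c = 2 powr (a + c)" by (simp add: powr_add)

lemma part2:
  fixes b K R \<Delta> :: nat
  assumes v: "valid_config b lo N C" and lv: "lv \<in> levels lo N"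
    and s: "2^(b-1) \<le> s" "s < 2^b" and C': "C' = C(lv := C lv + {#s#})"
    and AG: "A lo N C G < 2^b" and b: "b > 0" and NK: "real N < 2^K"
    and KD: "K + \<Delta> \<le> R" and Rb: "R + 3 \<le> b" and D: "2 \<le> \<Delta>"
  shows "(A_lev C' G lv \<ge> 2^b \<longrightarrow>
           (let Gd = int R - \<lfloor>log 2 (real (SS C' lv))\<rfloor> - lv in
              2^K \<le> A lo N C' Gd \<and> A lo N C' Gd < 2^b)) \<and>
        (A_lev C' G lv < 2^b \<and> A lo N C' G \<ge> 2^b \<longrightarrow>
           (let Gd = G - int \<Delta> in
              2^K \<le> A lo N C' Gd \<and> A lo N C' Gd < 2^b))"
proof -
  have NK': "real N < 2 powr real K" using NK by (simp add: powr_realpow)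
  have Xo: "X C' H l = X C H l" if "l \<noteq> lv" for H l
    using that C' by (simp add: X_def SS_def)
  have split: "(\<Sum>l\<in>levels lo N. X C' H l) = X C' H lv + (\<Sum>l\<in>levels lo N - {lv}. X C H l)" for H
  proof -
    have "(\<Sum>l\<in>levels lo N. X C' H l) = X C' H lv + (\<Sum>l\<in>levels lo N - {lv}. X C' H l)"
      using lv finite_levels[of lo N] by (simp add: sum.remove)
    also have "(\<Sum>l\<in>levels lo N - {lv}. X C' H l) = (\<Sum>l\<in>levels lo N - {lv}. X C H l)"
      by (rule sum.cong) (auto simp: Xo)
    finally show ?thesis .
  qed
  have sub: "(\<Sum>l\<in>levels lo N - {lv}. X C H l) \<le> (\<Sum>l\<in>levels lo N. X C H l)" for H
    by (rule sum_mono2) (auto simp: finite_levels X_nonneg)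
  have SXG: "(\<Sum>l\<in>levels lo N. X C G l) < 2 powr real b"
    using A_ge[of C G lo N] AG int_lt_pow by fastforce
  have Kb: "K + 4 \<le> b" using KD Rb D by simp
  have p2b: "2 powr real b = 4 * 2 powr (real b - 2)" "2 powr (real b - 2) = 4 * 2 powr (real b - 4)"
    "2 powr real b = 2 * 2 powr (real b - 1)"
    by (simp_all add: pw[symmetric] powr_diff)
  have pK: "2 powr real K \<le> 2 powr (real b - 4)" using Kb by simp
  have part_a: "A_lev C' G lv \<ge> 2^b \<Longrightarrow>
           (let Gd = int R - \<lfloor>log 2 (real (SS C' lv))\<rfloor> - lv in
              2^K \<le> A lo N C' Gd \<and> A lo N C' Gd < 2^b)"
  proof -
    assume h: "A_lev C' G lv \<ge> 2^b"
    define S' where "S' = real (SS C' lv)"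
    define e where "e = \<lfloor>log 2 S'\<rfloor>"
    define Gd where "Gd = int R - e - lv"
    have "s \<ge> 1" using s(1) by (metis le_trans one_le_numeral one_le_power)
    moreover have "SS C' lv \<ge> s" using C' by (simp add: SS_def)
    ultimately have S'pos: "S' > 0" by (simp add: S'_def)
    have e1: "2 powr real_of_int e \<le> S'" "S' < 2 powr (real_of_int e + 1)"
      using floor_log2[OF S'pos] by (simp_all add: e_def)
    have XGd: "X C' Gd lv = S' * 2 powr (real R - real_of_int e)"
      by (simp add: X_def S'_def Gd_def)
    have XGdlo: "X C' Gd lv \<ge> 2 powr real R"
    proof -
      have "2 powr real R = 2 powr real_of_int e * 2 powr (real R - real_of_int e)" by (simp add: pw)
      also have "\<dots> \<le> S' * 2 powr (real R - real_of_int e)" using e1 by (intro mult_right_mono) auto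
      finally show ?thesis using XGd by simp
    qed
    have XGdhi: "X C' Gd lv < 2 powr (real R + 1)"
    proof -
      have "X C' Gd lv < 2 powr (real_of_int e + 1) * 2 powr (real R - real_of_int e)"
        unfolding XGd using e1 by (intro mult_strict_right_mono) auto
      also have "\<dots> = 2 powr (real R + 1)" by (simp add: pw add.commute)
      finally show ?thesis .
    qed
    have "real_of_int (A_lev C' G lv) \<ge> 2 powr real b" using h int_ge_pow by blast
    hence "X C' G lv \<ge> 2 powr real b - 1" using A_lev_le[of C' G lv] by linarith
    moreover have "X C' G lv < 2 powr (real_of_int e + 1 + real_of_int (lv + G))"
    proof -
      have "X C' G lv = S' * 2 powr real_of_int (lv + G)" by (simp add: X_def S'_def)
      also have "\<dots> < 2 powr (real_of_int e + 1) * 2 powr real_of_int (lv + G)"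
        using e1 by (intro mult_strict_right_mono) auto
      finally show ?thesis by (simp add: pw)
    qed
    moreover have "2 powr (real b - 1) \<le> 2 powr real b - 1"
    proof -
      have "1 \<le> 2 powr (real b - 1)" using b by (intro ge_one_powr_ge_zero) auto
      thus ?thesis using p2b(3) by linarith
    qed
    ultimately have "2 powr (real b - 1) < 2 powr (real_of_int e + 1 + real_of_int (lv + G))" by linarith
    hence "real b - 1 < real_of_int e + 1 + real_of_int (lv + G)" by simp
    hence GdG: "Gd \<le> G - 2" using Rb unfolding Gd_def by linarith
    have Xq: "X C Gd l \<le> X C G l / 4" for l
    proof -
      have "X C Gd l = 2 powr real_of_int (Gd - G) * X C G l"
        using X_shift[of C G "Gd - G" l] by simp
      also have "\<dots> \<le> 2 powr (-2) * X C G l"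
        using GdG by (intro mult_right_mono) (auto simp: X_nonneg)
      finally show ?thesis by (simp add: powr_minus divide_simps)
    qed
    have "(\<Sum>l\<in>levels lo N - {lv}. X C Gd l) \<le> (\<Sum>l\<in>levels lo N - {lv}. X C G l / 4)"
      by (rule sum_mono) (rule Xq)
    also have "\<dots> \<le> (\<Sum>l\<in>levels lo N. X C G l) / 4"
      using sub[of G] by (simp add: sum_divide_distrib[symmetric])
    finally have oth: "(\<Sum>l\<in>levels lo N - {lv}. X C Gd l) < 2 powr real b / 4" using SXG by linarith
    have "2 powr (real R + 1) \<le> 2 powr (real b - 2)" using Rb by simp
    hence "real_of_int (A lo N C' Gd) < 2 powr real b"
      using A_le[of lo N C' Gd] split[of Gd] oth XGdhi NK' pK p2b by linarith
    hence hi: "A lo N C' Gd < 2^b" using int_lt_pow by blast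
    have "(\<Sum>l\<in>levels lo N - {lv}. X C Gd l) \<ge> 0" by (intro sum_nonneg X_nonneg)
    moreover have "2 powr real K \<le> 2 powr real R" using KD by simp
    ultimately have "real_of_int (A lo N C' Gd) \<ge> 2 powr real K"
      using A_ge[of C' Gd lo N] split[of Gd] XGdlo by linarith
    hence "2^K \<le> A lo N C' Gd" using int_ge_pow by blast
    with hi show ?thesis by (simp add: Gd_def e_def S'_def)
  qed
  have part_b: "A_lev C' G lv < 2^b \<and> A lo N C' G \<ge> 2^b \<Longrightarrow>
           (let Gd = G - int \<Delta> in
              2^K \<le> A lo N C' Gd \<and> A lo N C' Gd < 2^b)"
  proof -
    assume h: "A_lev C' G lv < 2^b \<and> A lo N C' G \<ge> 2^b"
    define Gd where "Gd = G - int \<Delta>"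
    have sh: "(\<Sum>l\<in>levels lo N. X C' Gd l) = 2 powr (- real \<Delta>) * (\<Sum>l\<in>levels lo N. X C' G l)"
      using X_shift[of C' G "- int \<Delta>"] by (simp add: Gd_def sum_distrib_left)
    have "real_of_int (A_lev C' G lv) < 2 powr real b" using h int_lt_pow by blast
    hence "X C' G lv < 2 powr real b" using A_lev_ge[of C' G lv] by linarith
    hence up: "(\<Sum>l\<in>levels lo N. X C' G l) < 2 * 2 powr real b"
      using split[of G] sub[of G] SXG by linarith
    have "2 powr (- real \<Delta>) \<le> 2 powr (-2)" using D by simp
    hence "2 powr (- real \<Delta>) \<le> 1/4" by (simp add: powr_minus)
    hence "(\<Sum>l\<in>levels lo N. X C' Gd l) \<le> 1/4 * (2 * 2 powr real b)"
      unfolding sh using up by (intro mult_mono) (auto intro: sum_nonneg X_nonneg)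
    hence "real_of_int (A lo N C' Gd) < 2 powr real b"
      using A_le[of lo N C' Gd] NK' pK p2b by linarith
    hence hi: "A lo N C' Gd < 2^b" using int_lt_pow by blast
    have "real_of_int (A lo N C' G) \<ge> 2 powr real b" using h int_ge_pow by blast
    hence "(\<Sum>l\<in>levels lo N. X C' G l) \<ge> 2 powr (real b - 1)"
      using A_le[of lo N C' G] NK' pK p2b by linarith
    hence "(\<Sum>l\<in>levels lo N. X C' Gd l) \<ge> 2 powr (- real \<Delta>) * 2 powr (real b - 1)"
      unfolding sh by (intro mult_left_mono) auto
    moreover have "2 powr (- real \<Delta>) * 2 powr (real b - 1) \<ge> 2 powr real K"
      unfolding pw using KD Rb by simp
    ultimately have "real_of_int (A lo N C' Gd) \<ge> 2 powr real K"
      using A_ge[of C' Gd lo N] by linarith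
    hence "2^K \<le> A lo N C' Gd" using int_ge_pow by blast
    with hi show ?thesis by (simp add: Gd_def)
  qed
  show ?thesis using part_a part_b by blast
qed


lemma geom_half: "(\<Sum>r=0..n. 1 / (2::real)^r) = 2 - 1 / 2^n"
  by (induction n) (simp_all add: field_simps)

lemma reindex_lam:
  fixes g :: "int \<Rightarrow> real"
  shows "(\<Sum>r=0..b. g (lam - int r)) = (\<Sum>l\<in>{lam - int b..lam}. g l)"
proof -
  have inj: "inj_on (\<lambda>r::nat. lam - int r) {0..b}" by (auto simp: inj_on_def)
  have im: "(\<lambda>r::nat. lam - int r) ` {0..b} = {lam - int b..lam}"
  proof
    show "{lam - int b..lam} \<subseteq> (\<lambda>r::nat. lam - int r) ` {0..b}"
    proof
      fix x assume "x \<in> {lam - int b..lam}"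
      hence "x = lam - int (nat (lam - x))" "nat (lam - x) \<in> {0..b}" by auto
      thus "x \<in> (\<lambda>r::nat. lam - int r) ` {0..b}" by blast
    qed
  qed auto
  show ?thesis using sum.reindex[OF inj, of g] im by simp
qed

lemma part4:
  fixes b L :: nat
  assumes v: "valid_config b lo N C" and z: "zcount lo N C \<ge> 1" and b: "b > 0"
    and NL: "real N < 2 powr real L" and P2: "2 powr real L * (real b + 10) < 2 powr real b"
  shows "(let lam = Max {l. C l \<noteq> {#}};
             H = (\<lambda>r::nat. SS C (lam - int r) div 2^b);
             E = (\<Sum>r=0..b. \<lfloor>real (H r) * 2 powr (1 - real r)\<rfloor>);
             t = \<lfloor>log 2 (real_of_int (max E 1))\<rfloor>;
             Gu = int L + 1 - int b - t - lam
         in 2^L \<le> A lo N C Gu \<and> A lo N C Gu < 2^b)"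
proof -
  define Ne where "Ne = {l. C l \<noteq> {#}}"
  have Nesub: "Ne \<subseteq> levels lo N" using v by (auto simp: valid_config_def Ne_def)
  hence finNe: "finite Ne" using finite_levels finite_subset by blast
  have "Ne \<noteq> {}"
  proof
    assume "Ne = {}"
    hence "\<forall>l. C l = {#}" by (auto simp: Ne_def)
    hence "zcount lo N C = 0" by (simp add: zcount_def)
    thus False using z by simp
  qed
  define lam where "lam = Max Ne"
  have lamNe: "lam \<in> Ne" using finNe \<open>Ne \<noteq> {}\<close> by (simp add: lam_def)
  have above: "C l = {#}" if "l > lam" for l
  proof (rule ccontr)
    assume "C l \<noteq> {#}"
    hence "l \<in> Ne" by (simp add: Ne_def)
    hence "l \<le> lam" unfolding lam_def using finNe by simp
    thus False using that by simp
  qed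
  have lamlev: "lam \<in> levels lo N" using lamNe Nesub by blast
  define H where "H = (\<lambda>r::nat. SS C (lam - int r) div 2^b)"
  define E where "E = (\<Sum>r=0..b. \<lfloor>real (H r) * 2 powr (1 - real r)\<rfloor>)"
  define t where "t = \<lfloor>log 2 (real_of_int (max E 1))\<rfloor>"
  define Gu where "Gu = int L + 1 - int b - t - lam"
  have elems: "\<forall>x\<in>#C l. 2^(b-1) \<le> x \<and> x < 2^b" for l using v by (simp add: valid_config_def)
  have outside: "C l = {#}" if "l \<notin> levels lo N" for l using v that by (simp add: valid_config_def)
  obtain x where "x \<in># C lam" using lamNe by (auto simp: Ne_def)
  hence "2^(b-1) \<le> SS C lam" using elems[of lam] mem_le_sum_mset[of x "C lam"] by (auto simp: SS_def)
  hence SSlam: "real (SS C lam) \<ge> 2 powr (real b - 1)"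
    using real_pow_b1[OF b] of_nat_le_iff by metis
  have "(\<Sum>l\<in>levels lo N. SS C l) \<le> (\<Sum>l\<in>levels lo N. size (C l) * 2^b)"
  proof (rule sum_mono)
    fix l show "SS C l \<le> size (C l) * 2^b" unfolding SS_def
      by (rule sum_mset_bound) (use elems in \<open>auto intro: less_imp_le\<close>)
  qed
  also have "\<dots> = zcount lo N C * 2^b" by (simp add: zcount_def sum_distrib_right)
  finally have "real (\<Sum>l\<in>levels lo N. SS C l) \<le> real (zcount lo N C) * 2^b"
    by (metis of_nat_le_iff of_nat_mult of_nat_numeral of_nat_power)
  moreover have "real (zcount lo N C) < 2^b" using v by (simp add: valid_config_def)
  ultimately have "real (\<Sum>l\<in>levels lo N. SS C l) < 2^b * 2^b"
    by (smt (verit) mult_strict_right_mono zero_less_power)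
  hence tot: "(\<Sum>l\<in>levels lo N. real (SS C l)) < 2 powr real b * 2 powr real b"
    by (simp add: powr_realpow)
  define f where "f l = real (SS C l) * 2 powr real_of_int (l - lam)" for l
  have fnn: "0 \<le> f l" for l by (simp add: f_def)
  define S where "S = (\<Sum>l\<in>levels lo N. f l)"
  define I where "I = {lam - int b..lam}"
  define T where "T = (\<Sum>r=0..b. real (SS C (lam - int r)) / 2^r)"
  have TI: "T = (\<Sum>l\<in>I. f l)"
  proof -
    have "T = (\<Sum>r=0..b. f (lam - int r))"
      unfolding T_def f_def by (rule sum.cong) (simp_all add: powr_minus divide_inverse powr_realpow)
    thus ?thesis unfolding I_def by (simp add: reindex_lam)
  qed
  have TS: "T \<le> S"
  proof -
    have "(\<Sum>l\<in>I \<inter> levels lo N. f l) = (\<Sum>l\<in>I. f l)"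
      by (rule sum.mono_neutral_left) (auto simp: I_def f_def SS_def outside)
    moreover have "(\<Sum>l\<in>I \<inter> levels lo N. f l) \<le> S"
      unfolding S_def by (rule sum_mono2) (auto simp: finite_levels fnn)
    ultimately show ?thesis using TI by simp
  qed
  have ST: "S < T + 2 powr (real b - 1)"
  proof -
    have "S = (\<Sum>l\<in>levels lo N \<inter> I. f l) + (\<Sum>l\<in>levels lo N - I. f l)"
      unfolding S_def by (rule sum.Int_Diff) (rule finite_levels)
    moreover have "(\<Sum>l\<in>levels lo N \<inter> I. f l) \<le> T"
      unfolding TI by (rule sum_mono2) (auto simp: I_def fnn)
    moreover have "(\<Sum>l\<in>levels lo N - I. f l) \<le> (\<Sum>l\<in>levels lo N - I. real (SS C l) * 2 powr (- real b - 1))"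
    proof (rule sum_mono)
      fix l assume l: "l \<in> levels lo N - I"
      show "f l \<le> real (SS C l) * 2 powr (- real b - 1)"
      proof (cases "l > lam")
        case True thus ?thesis using above[OF True] by (simp add: f_def SS_def)
      next
        case False
        hence "l - lam \<le> - int b - 1" using l by (auto simp: I_def)
        hence "2 powr real_of_int (l - lam) \<le> 2 powr (- real b - 1)" by simp
        thus ?thesis unfolding f_def by (intro mult_left_mono) auto
      qed
    qed
    moreover have "(\<Sum>l\<in>levels lo N - I. real (SS C l) * 2 powr (- real b - 1))
        \<le> (\<Sum>l\<in>levels lo N. real (SS C l) * 2 powr (- real b - 1))"
      by (rule sum_mono2) (auto simp: finite_levels)
    moreover have "(\<Sum>l\<in>levels lo N. real (SS C l) * 2 powr (- real b - 1)) < 2 powr (real b - 1)"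
    proof -
      have "(\<Sum>l\<in>levels lo N. real (SS C l) * 2 powr (- real b - 1))
          = (\<Sum>l\<in>levels lo N. real (SS C l)) * 2 powr (- real b - 1)"
        by (simp add: sum_distrib_right)
      also have "\<dots> < 2 powr real b * 2 powr real b * 2 powr (- real b - 1)"
        using tot by (intro mult_strict_right_mono) auto
      also have "\<dots> = 2 powr (real b - 1)" by (simp add: pw)
      finally show ?thesis .
    qed
    ultimately show ?thesis by linarith
  qed
  have p21: "2 powr (1 - real r) = 2 / 2^r" for r :: nat
    by (simp add: powr_diff powr_realpow)
  have pb: "2 powr (real b - 1) * 2 = (2::real)^b"
    by (simp add: powr_diff powr_realpow)
  have ET: "2 powr (real b - 1) * real_of_int E \<le> T"
  proof -
    have "2 powr (real b - 1) * real_of_int E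
        = (\<Sum>r=0..b. 2 powr (real b - 1) * real_of_int \<lfloor>real (H r) * 2 powr (1 - real r)\<rfloor>)"
      by (simp add: E_def sum_distrib_left)
    also have "\<dots> \<le> T" unfolding T_def
    proof (rule sum_mono)
      fix r assume "r \<in> {0..b}"
      have "real_of_int \<lfloor>real (H r) * 2 powr (1 - real r)\<rfloor> \<le> real (H r) * 2 / 2^r"
        using of_int_floor_le p21 by (metis times_divide_eq_right)
      hence "2 powr (real b - 1) * real_of_int \<lfloor>real (H r) * 2 powr (1 - real r)\<rfloor>
          \<le> 2 powr (real b - 1) * (real (H r) * 2 / 2^r)" by (intro mult_left_mono) auto
      also have "\<dots> = real (H r * 2^b) / 2^r" using pb by (simp add: field_simps)
      also have "\<dots> \<le> real (SS C (lam - int r)) / 2^r"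
        unfolding H_def by (intro divide_right_mono) (simp_all add: div_times_less_eq_dividend del: of_nat_mult)
      finally show "2 powr (real b - 1) * real_of_int \<lfloor>real (H r) * 2 powr (1 - real r)\<rfloor>
          \<le> real (SS C (lam - int r)) / 2^r" .
    qed
    finally show ?thesis .
  qed
  have TE: "T < 2 powr (real b - 1) * (real_of_int E + real b + 5)"
  proof -
    have "T \<le> (\<Sum>r=0..b. 2 powr (real b - 1) * (real_of_int \<lfloor>real (H r) * 2 powr (1 - real r)\<rfloor> + 1) + 2^b * (1 / 2^r))"
      unfolding T_def
    proof (rule sum_mono)
      fix r assume "r \<in> {0..b}"
      define q where "q = SS C (lam - int r)"
      have "q < (q div 2^b + 1) * 2^b"
        by (metis add.commute div_mult_mod_eq mod_less_divisor mult_Suc nat_add_left_cancel_less plus_1_eq_Suc zero_less_numeral zero_less_power)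
      hence hq: "real q \<le> real (H r) * 2^b + 2^b" unfolding H_def q_def
        by (metis (mono_tags, lifting) distrib_right less_imp_le mult_1 of_nat_add of_nat_le_iff of_nat_mult of_nat_numeral of_nat_power)
      have "real (H r) * 2 / 2^r \<le> real_of_int \<lfloor>real (H r) * 2 powr (1 - real r)\<rfloor> + 1"
        using p21[of r] real_of_int_floor_add_one_ge[of "real (H r) * 2 powr (1 - real r)"] by simp
      hence m1: "2 powr (real b - 1) * (real (H r) * 2 / 2^r) \<le> 2 powr (real b - 1) * (real_of_int \<lfloor>real (H r) * 2 powr (1 - real r)\<rfloor> + 1)"
        by (intro mult_left_mono) auto
      have eq1: "2 powr (real b - 1) * (real (H r) * 2 / 2^r) = real (H r) * 2^b / 2^r"
        using pb by (simp add: field_simps)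
      have A1: "real (H r) * 2^b / 2^r \<le> 2 powr (real b - 1) * (real_of_int \<lfloor>real (H r) * 2 powr (1 - real r)\<rfloor> + 1)"
        using m1 unfolding eq1 .
      have "real q / 2^r \<le> (real (H r) * 2^b + 2^b) / 2^r"
        using hq by (intro divide_right_mono) auto
      also have "\<dots> = real (H r) * 2^b / 2^r + 2^b * (1/2^r)" by (simp add: add_divide_distrib)
      finally show "real q / 2^r \<le> 2 powr (real b - 1) * (real_of_int \<lfloor>real (H r) * 2 powr (1 - real r)\<rfloor> + 1) + 2^b * (1 / 2^r)"
        using A1 by linarith
    qed
    also have "\<dots> = 2 powr (real b - 1) * (real_of_int E + real b + 1) + 2^b * (2 - 1/2^b)"
    proof -
      have g: "(\<Sum>r=0..b. (2::real)^b * (1/2^r)) = 2^b * (2 - 1/2^b)"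
        by (simp only: sum_distrib_left[symmetric] geom_half)
      have h: "(\<Sum>r=0..b. 2 powr (real b - 1) * (real_of_int \<lfloor>real (H r) * 2 powr (1 - real r)\<rfloor> + 1))
          = 2 powr (real b - 1) * (real_of_int E + real b + 1)"
        by (simp add: sum_distrib_left[symmetric] sum.distrib E_def)
      show ?thesis unfolding sum.distrib g h ..
    qed
    also have "\<dots> < 2 powr (real b - 1) * (real_of_int E + real b + 1) + 2 powr (real b - 1) * 4"
    proof -
      have "(2::real)^b * (2 - 1/2^b) = 2 * 2^b - 1" by (simp add: field_simps)
      thus ?thesis using pb by linarith
    qed
    finally show ?thesis by (simp add: algebra_simps)
  qed
  have SE: "S < 2 powr (real b - 1) * (real_of_int E + real b + 6)"
    using ST TE by (simp add: algebra_simps)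
  have SX: "(\<Sum>l\<in>levels lo N. X C Gu l) = 2 powr real_of_int (int L + 1 - int b - t) * S"
    unfolding S_def sum_distrib_left
    by (rule sum.cong) (simp_all add: X_def f_def Gu_def pw algebra_simps)
  have cpow: "2 powr real_of_int (int L + 1 - int b - t) * 2 powr (real b - 1) = 2 powr (real L - real_of_int t)"
    by (simp add: pw)
  have Slo: "S \<ge> 2 powr (real b - 1) * 2 powr real_of_int t"
  proof (cases "E \<ge> 1")
    case True
    hence "t = \<lfloor>log 2 (real_of_int E)\<rfloor>" by (simp add: t_def)
    hence "2 powr real_of_int t \<le> real_of_int E" using floor_log2(1)[of "real_of_int E"] True by simp
    hence "2 powr (real b - 1) * 2 powr real_of_int t \<le> 2 powr (real b - 1) * real_of_int E"
      by (intro mult_left_mono) auto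
    thus ?thesis using ET TS by linarith
  next
    case False
    hence t0: "t = 0" by (simp add: t_def)
    have "f lam \<le> S" unfolding S_def by (rule member_le_sum) (auto simp: fnn lamlev finite_levels)
    thus ?thesis using SSlam t0 by (simp add: f_def)
  qed
  have "(\<Sum>l\<in>levels lo N. X C Gu l) \<ge> 2 powr real L"
  proof -
    have "(\<Sum>l\<in>levels lo N. X C Gu l) \<ge> 2 powr real_of_int (int L + 1 - int b - t) * (2 powr (real b - 1) * 2 powr real_of_int t)"
      unfolding SX by (intro mult_left_mono Slo) auto
    also have "2 powr real_of_int (int L + 1 - int b - t) * (2 powr (real b - 1) * 2 powr real_of_int t) = 2 powr real L"
      by (simp add: pw)
    finally show ?thesis .
  qed
  hence lo: "2^L \<le> A lo N C Gu" using A_ge[of C Gu lo N] int_ge_pow by fastforce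
  have "(\<Sum>l\<in>levels lo N. X C Gu l) < 2 powr (real L - real_of_int t) * (real_of_int E + real b + 6)"
  proof -
    have "(\<Sum>l\<in>levels lo N. X C Gu l) < 2 powr real_of_int (int L + 1 - int b - t) * (2 powr (real b - 1) * (real_of_int E + real b + 6))"
      unfolding SX by (intro mult_strict_left_mono SE) auto
    thus ?thesis using cpow by (simp add: mult.assoc[symmetric])
  qed
  moreover have "2 powr (real L - real_of_int t) * (real_of_int E + real b + 6) \<le> 2 powr real L * (real b + 8)"
  proof (cases "E \<ge> 1")
    case True
    hence tE: "t = \<lfloor>log 2 (real_of_int E)\<rfloor>" by (simp add: t_def)
    hence "real_of_int E < 2 powr (real_of_int t + 1)" using floor_log2(2)[of "real_of_int E"] True by simp
    hence "2 powr (real L - real_of_int t) * real_of_int E \<le> 2 powr (real L - real_of_int t) * 2 powr (real_of_int t + 1)"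
      by (intro mult_left_mono) auto
    also have "\<dots> = 2 powr real L * 2" by (simp add: pw powr_add)
    finally have 1: "2 powr (real L - real_of_int t) * real_of_int E \<le> 2 powr real L * 2" .
    have "t \<ge> 0" using tE True by simp
    hence "2 powr (real L - real_of_int t) \<le> 2 powr real L" by simp
    hence "2 powr (real L - real_of_int t) * (real b + 6) \<le> 2 powr real L * (real b + 6)"
      by (intro mult_right_mono) auto
    thus ?thesis using 1 by (simp add: algebra_simps)
  next
    case False
    hence "t = 0" by (simp add: t_def)
    moreover have "real_of_int E \<le> 2" using False by simp
    ultimately show ?thesis by (simp add: algebra_simps)
  qed
  ultimately have "real_of_int (A lo N C Gu) < 2 powr real L * (real b + 9)"
    using A_le[of lo N C Gu] NL by (simp add: algebra_simps)
  moreover have "2 powr real L * (real b + 9) < 2 powr real L * (real b + 10)" by simp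
  ultimately have "real_of_int (A lo N C Gu) < 2 powr real b" using P2 by linarith
  hence "A lo N C Gu < 2^b" using int_lt_pow by blast
  with lo show ?thesis
    unfolding Let_def Gu_def t_def E_def H_def lam_def Ne_def by blast
qed


theorem mainTheorem10:
  fixes b N K \<Delta> R L0 L :: nat and lo :: int
  assumes pos: "b > 0" "N > 0" "K > 0" "\<Delta> > 0" "R > 0" "L0 > 0" "L > 0"
    and hD1: "2 \<le> \<Delta>"
    and hD2: "int \<Delta> \<le> int R - int K"
    and hD3: "int R - int K < int b - int K - 2"
    and hK1: "log 2 (real N) < real K"
    and hK2: "K \<le> L0" and hK3: "L0 \<le> L"
    and hL: "real L < real b - log 2 (real b + 10)"
  shows
   "(\<forall>C lam s. valid_config b lo N C \<and> lam \<in> levels lo N \<and> C lam = {#s#} \<and>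
        (\<forall>l. l \<noteq> lam \<longrightarrow> C l = {#}) \<longrightarrow>
        (let G = int L0 + 1 - int b - lam in 2^K \<le> A lo N C G \<and> A lo N C G < 2^b))
  \<and> (\<forall>C C' lv s G. valid_config b lo N C \<and> lv \<in> levels lo N \<and>
        2^(b-1) \<le> s \<and> s < 2^b \<and> C' = C(lv := C lv + {#s#}) \<and>
        valid_config b lo N C' \<and> A lo N C G < 2^b \<longrightarrow>
        (A_lev C' G lv \<ge> 2^b \<longrightarrow>
           (let Gd = int R - \<lfloor>log 2 (real (SS C' lv))\<rfloor> - lv in
              2^K \<le> A lo N C' Gd \<and> A lo N C' Gd < 2^b)) \<and>
        (A_lev C' G lv < 2^b \<and> A lo N C' G \<ge> 2^b \<longrightarrow>
           (let Gd = G - int \<Delta> in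
              2^K \<le> A lo N C' Gd \<and> A lo N C' Gd < 2^b)))
  \<and> (\<forall>C C'. valid_config b lo N C \<and> (\<forall>l. C' l \<subseteq># C l) \<longrightarrow>
        (\<forall>G. A lo N C' G \<le> A lo N C G \<and> (A lo N C G < 2^b \<longrightarrow> A lo N C' G < 2^b)))
  \<and> (\<forall>C. valid_config b lo N C \<and> zcount lo N C \<ge> 1 \<longrightarrow>
        (let lam = Max {l. C l \<noteq> {#}};
             H = (\<lambda>r::nat. SS C (lam - int r) div 2^b);
             E = (\<Sum>r=0..b. \<lfloor>real (H r) * 2 powr (1 - real r)\<rfloor>);
             t = \<lfloor>log 2 (real_of_int (max E 1))\<rfloor>;
             Gu = int L + 1 - int b - t - lam
         in 2^L \<le> A lo N C Gu \<and> A lo N C Gu < 2^b))"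
proof -
  note P = params[OF pos(2) hK1 hL]
  have L0b: "L0 + 4 \<le> b" using P(3) hK3 by simp
  have KD: "K + \<Delta> \<le> R" using hD2 by simp
  have Rb: "R + 3 \<le> b" using hD3 by simp
  have NL: "real N < 2 powr real L"
  proof -
    have "(2::real)^K \<le> 2^L" using hK2 hK3 by simp
    hence "real N < 2^L" using P(1) by linarith
    thus ?thesis by (simp add: powr_realpow)
  qed
  have P2: "2 powr real L * (real b + 10) < 2 powr real b" using P(2) by (simp add: powr_realpow)
  have p1: "\<forall>C lam s. valid_config b lo N C \<and> lam \<in> levels lo N \<and> C lam = {#s#} \<and>
        (\<forall>l. l \<noteq> lam \<longrightarrow> C l = {#}) \<longrightarrow>
        (let G = int L0 + 1 - int b - lam in 2^K \<le> A lo N C G \<and> A lo N C G < 2^b)"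
  proof (intro allI impI)
    fix C lam s assume h: "valid_config b lo N C \<and> lam \<in> levels lo N \<and> C lam = {#s#} \<and>
        (\<forall>l. l \<noteq> lam \<longrightarrow> C l = {#})"
    hence h1: "valid_config b lo N C" and h2: "lam \<in> levels lo N" and h3: "C lam = {#s#}"
      and h4: "\<forall>l. l \<noteq> lam \<longrightarrow> C l = {#}" by auto
    show "let G = int L0 + 1 - int b - lam in 2^K \<le> A lo N C G \<and> A lo N C G < 2^b"
      unfolding Let_def by (rule part1[OF h1 h2 h3 h4 pos(1) hK2 L0b])
  qed
  have p2: "\<forall>C C' lv s G. valid_config b lo N C \<and> lv \<in> levels lo N \<and>
        2^(b-1) \<le> s \<and> s < 2^b \<and> C' = C(lv := C lv + {#s#}) \<and>
        valid_config b lo N C' \<and> A lo N C G < 2^b \<longrightarrow>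
        (A_lev C' G lv \<ge> 2^b \<longrightarrow>
           (let Gd = int R - \<lfloor>log 2 (real (SS C' lv))\<rfloor> - lv in
              2^K \<le> A lo N C' Gd \<and> A lo N C' Gd < 2^b)) \<and>
        (A_lev C' G lv < 2^b \<and> A lo N C' G \<ge> 2^b \<longrightarrow>
           (let Gd = G - int \<Delta> in
              2^K \<le> A lo N C' Gd \<and> A lo N C' Gd < 2^b))"
  proof (intro allI impI)
    fix C C' lv s G
    assume h: "valid_config b lo N C \<and> lv \<in> levels lo N \<and>
        2^(b-1) \<le> s \<and> s < 2^b \<and> C' = C(lv := C lv + {#s#}) \<and>
        valid_config b lo N C' \<and> A lo N C G < 2^b"
    hence h1: "valid_config b lo N C" and h2: "lv \<in> levels lo N" and h3: "2^(b-1) \<le> s"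
      and h4: "s < 2^b" and h5: "C' = C(lv := C lv + {#s#})" and h7: "A lo N C G < 2^b" by auto
    show "(A_lev C' G lv \<ge> 2^b \<longrightarrow>
           (let Gd = int R - \<lfloor>log 2 (real (SS C' lv))\<rfloor> - lv in
              2^K \<le> A lo N C' Gd \<and> A lo N C' Gd < 2^b)) \<and>
        (A_lev C' G lv < 2^b \<and> A lo N C' G \<ge> 2^b \<longrightarrow>
           (let Gd = G - int \<Delta> in
              2^K \<le> A lo N C' Gd \<and> A lo N C' Gd < 2^b))"
      by (rule part2[OF h1 h2 h3 h4 h5 h7 pos(1) P(1) KD Rb hD1])
  qed
  have p3: "\<forall>C C'. valid_config b lo N C \<and> (\<forall>l. C' l \<subseteq># C l) \<longrightarrow>
        (\<forall>G. A lo N C' G \<le> A lo N C G \<and> (A lo N C G < 2^b \<longrightarrow> A lo N C' G < 2^b))"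
  proof (intro allI impI conjI)
    fix C C' G assume h: "valid_config b lo N C \<and> (\<forall>l. C' l \<subseteq># C l)"
    hence h2: "\<forall>l. C' l \<subseteq># C l" by auto
    show "A lo N C' G \<le> A lo N C G" by (rule part3[OF h2])
    show "A lo N C G < 2^b \<Longrightarrow> A lo N C' G < 2^b" using part3[OF h2, of lo N G] by linarith
  qed
  have p4: "\<forall>C. valid_config b lo N C \<and> zcount lo N C \<ge> 1 \<longrightarrow>
        (let lam = Max {l. C l \<noteq> {#}};
             H = (\<lambda>r::nat. SS C (lam - int r) div 2^b);
             E = (\<Sum>r=0..b. \<lfloor>real (H r) * 2 powr (1 - real r)\<rfloor>);
             t = \<lfloor>log 2 (real_of_int (max E 1))\<rfloor>;
             Gu = int L + 1 - int b - t - lam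
         in 2^L \<le> A lo N C Gu \<and> A lo N C Gu < 2^b)"
  proof (intro allI impI)
    fix C assume h: "valid_config b lo N C \<and> zcount lo N C \<ge> 1"
    hence h1: "valid_config b lo N C" and h2: "zcount lo N C \<ge> 1" by auto
    show "let lam = Max {l. C l \<noteq> {#}};
             H = (\<lambda>r::nat. SS C (lam - int r) div 2^b);
             E = (\<Sum>r=0..b. \<lfloor>real (H r) * 2 powr (1 - real r)\<rfloor>);
             t = \<lfloor>log 2 (real_of_int (max E 1))\<rfloor>;
             Gu = int L + 1 - int b - t - lam
         in 2^L \<le> A lo N C Gu \<and> A lo N C Gu < 2^b"
      by (rule part4[OF h1 h2 pos(1) NL P2])
  qed
  show ?thesis by (intro conjI p1 p2 p3 p4)
qed

end
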